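(* Let $\mathbf u\in W^{1,\varphi}(\Omega,\mathbb{R}^N)$, let $B_\varrho(x_0)\subseteq\Omega$ and $\vartheta\in(0,1)$, and assume $$\frac{\Phi(x_0,\varrho)}{\varphi(|(D\mathbf u)_{x_0,\varrho}|)}\le\frac{\vartheta^n}{2^{\mu_2+1}c_{\mu_2}} .$$ Then $|(D\mathbf u)_{x_0,\varrho}|\le 2\,|(D\mathbf u)_{x_0,\vartheta\varrho}|$.
   Context: $\Omega\subset\mathbb{R}^n$ open bounded, $n,N\ge2$; $B_\varrho(x_0)$ open ball; $(g)_{x_0,\varrho}$ average of $g$ over $B_\varrho(x_0)$. $\varphi:[0,\infty)\to[0,\infty)$ is an $N$-function (convex, $\varphi(0)=0$, right-continuous nondecreasing derivative $\varphi'$, $\varphi'(0)=0$, $\varphi'(t)>0$ for $t>0$, $\varphi'(t)\to\infty$) with $\varphi\in C^1([0,\infty))\cap C^2((0,\infty))$ and $\mu_1-1\le t\varphi''(t)/\varphi'(t)\le\mu_2-1$ for $t>0$, constants $1<\mu_1\le\mu_2$. Shifted $N$-functions: $\varphi_a(t):=\int_0^t\varphi'(a+s)\frac{s}{a+s}\,\mathrm{d}s$ for $a\ge0$ (so $\varphi_0=\varphi$). $c_{\mu_2}$ is a constant (depending only on $\varphi$) such that $\varphi_{|\mathbf a|}(t)\le c_{\mu_2}\varphi_{|\mathbf b|}(t)+2^{-\mu_2-1}\varphi_{|\mathbf a|}(|\mathbf a-\mathbf b|)$ for all $\mathbf a,\mathbf b\in\mathbb{R}^{N\times n}$ and $t\ge0$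 (change-of-shift inequality). Excess: $\Phi(x_0,\varrho):=\frac{1}{|B_\varrho(x_0)|}\int_{B_\varrho(x_0)}\varphi_{|(D\mathbf u)_{x_0,\varrho}|}\big(|D\mathbf u-(D\mathbf u)_{x_0,\varrho}|\big)\,\mathrm{d}x$. *)

theory Defs
  imports "HOL-Analysis.Analysis"
begin

definition N_function_reg ::
  "(real \<Rightarrow> real) \<Rightarrow> (real \<Rightarrow> real) \<Rightarrow> (real \<Rightarrow> real) \<Rightarrow> real \<Rightarrow> real \<Rightarrow> bool" where
  "N_function_reg \<phi> \<phi>' \<phi>'' \<mu>1 \<mu>2 \<longleftrightarrow>
     convex_on {0..} \<phi> \<and> \<phi> 0 = 0 \<and>
     (\<forall>t\<ge>0. (\<phi> has_real_derivative \<phi>' t) (at t within {0..})) \<and>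
     continuous_on {0..} \<phi>' \<and>
     mono_on {0..} \<phi>' \<and> \<phi>' 0 = 0 \<and> (\<forall>t>0. \<phi>' t > 0) \<and>
     filterlim \<phi>' at_top at_top \<and>
     (\<forall>t>0. (\<phi>' has_real_derivative \<phi>'' t) (at t)) \<and>
     continuous_on {0<..} \<phi>'' \<and>
     1 < \<mu>1 \<and> \<mu>1 \<le> \<mu>2 \<and>
     (\<forall>t>0. \<mu>1 - 1 \<le> t * \<phi>'' t / \<phi>' t \<and> t * \<phi>'' t / \<phi>' t \<le> \<mu>2 - 1)"

definition shifted :: "(real \<Rightarrow> real) \<Rightarrow> real \<Rightarrow> real \<Rightarrow> real" where
  "shifted \<phi>' a t = integral {0..t} (\<lambda>s. \<phi>' (a + s) * s / (a + s))"

definition avg :: "('a::euclidean_space \<Rightarrow> 'b::euclidean_space) \<Rightarrow> 'a \<Rightarrow> real \<Rightarrow> 'b" where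
  "avg g x0 r = (LINT x:ball x0 r|lebesgue. g x) /\<^sub>R measure lebesgue (ball x0 r)"

definition pd :: "'n::finite \<Rightarrow> (real^'n \<Rightarrow> real) \<Rightarrow> real^'n \<Rightarrow> real" where
  "pd j f = (\<lambda>x. frechet_derivative f (at x) (axis j 1))"

definition smooth_fun :: "(real^'n::finite \<Rightarrow> real) \<Rightarrow> bool" where
  "smooth_fun f \<longleftrightarrow> (\<forall>js. \<forall>x. foldr pd js f differentiable (at x))"

definition test_fun :: "(real^'n::finite) set \<Rightarrow> (real^'n \<Rightarrow> real) \<Rightarrow> bool" where
  "test_fun \<Omega> \<psi> \<longleftrightarrow> smooth_fun \<psi> \<and> compact (closure {x. \<psi> x \<noteq> 0})
                      \<and> closure {x. \<psi> x \<noteq> 0} \<subseteq> \<Omega>"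

definition weak_gradient ::
  "(real^'n::finite) set \<Rightarrow> (real^'n \<Rightarrow> real^'m::finite) \<Rightarrow> (real^'n \<Rightarrow> real^'n^'m) \<Rightarrow> bool" where
  "weak_gradient \<Omega> u G \<longleftrightarrow>
     (\<forall>K. compact K \<and> K \<subseteq> \<Omega> \<longrightarrow> set_integrable lebesgue K u \<and> set_integrable lebesgue K G) \<and>
     (\<forall>\<psi>. test_fun \<Omega> \<psi> \<longrightarrow> (\<forall>i j.
        (LINT x:\<Omega>|lebesgue. u x $ i * pd j \<psi> x) = - (LINT x:\<Omega>|lebesgue. G x $ i $ j * \<psi> x)))"

definition orlicz :: "(real \<Rightarrow> real) \<Rightarrow> ('a::euclidean_space) set \<Rightarrow> ('a \<Rightarrow> 'b::euclidean_space) \<Rightarrow> bool" where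
  "orlicz \<phi> \<Omega> f \<longleftrightarrow> f \<in> borel_measurable (restrict_space lebesgue \<Omega>) \<and>
     (\<exists>k>0. set_integrable lebesgue \<Omega> (\<lambda>x. \<phi> (norm (f x) / k)))"

definition sobolev_orlicz ::
  "(real \<Rightarrow> real) \<Rightarrow> (real^'n::finite) set \<Rightarrow> (real^'n \<Rightarrow> real^'m::finite) \<Rightarrow> (real^'n \<Rightarrow> real^'n^'m) \<Rightarrow> bool" where
  "sobolev_orlicz \<phi> \<Omega> u Du \<longleftrightarrow> orlicz \<phi> \<Omega> u \<and> weak_gradient \<Omega> u Du \<and> orlicz \<phi> \<Omega> Du"

definition excess ::
  "(real \<Rightarrow> real) \<Rightarrow> (real^'n::finite \<Rightarrow> real^'n^'m::finite) \<Rightarrow> real^'n \<Rightarrow> real \<Rightarrow> real" where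
  "excess \<phi>' Du x0 r = avg (\<lambda>x. shifted \<phi>' (norm (avg Du x0 r)) (norm (Du x - avg Du x0 r))) x0 r"

end

theory Submission
  imports Defs
begin


context
  fixes \<phi> \<phi>' \<phi>'' :: "real \<Rightarrow> real" and \<mu>1 \<mu>2 :: real
  assumes N: "N_function_reg \<phi> \<phi>' \<phi>'' \<mu>1 \<mu>2"
begin

lemma Nf_basic:
  shows "\<phi> 0 = 0" "\<phi>' 0 = 0" "\<And>t. t > 0 \<Longrightarrow> \<phi>' t > 0"
    "\<And>t. t \<ge> 0 \<Longrightarrow> (\<phi> has_real_derivative \<phi>' t) (at t within {0..})"
    "continuous_on {0..} \<phi>'" "mono_on {0..} \<phi>'"
    "\<And>t. t > 0 \<Longrightarrow> (\<phi>' has_real_derivative \<phi>'' t) (at t)"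
    "1 < \<mu>2"
    "\<And>t. t > 0 \<Longrightarrow> t * \<phi>'' t / \<phi>' t \<le> \<mu>2 - 1"
  using N unfolding N_function_reg_def by auto

lemma phi'_nonneg: "t \<ge> 0 \<Longrightarrow> \<phi>' t \<ge> 0"
  using Nf_basic(2) Nf_basic(3)[of t] by (cases "t = 0") auto

lemma phi'_mono: "0 \<le> x \<Longrightarrow> x \<le> y \<Longrightarrow> \<phi>' x \<le> \<phi>' y"
  using Nf_basic(6) by (auto simp: mono_on_def)

lemma phi_deriv_at: "t > 0 \<Longrightarrow> (\<phi> has_real_derivative \<phi>' t) (at t)"
proof -
  assume t: "t > 0"
  have "(\<phi> has_real_derivative \<phi>' t) (at t within {0<..})"
    by (rule DERIV_subset[OF Nf_basic(4)]) (use t in auto)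
  then show ?thesis using t at_within_open[of t "{0<..}"] by simp
qed

lemma phi_cont: "continuous_on {0..} \<phi>"
  by (rule DERIV_continuous_on, rule Nf_basic(4)) auto

lemma phi_mono: "0 \<le> x \<Longrightarrow> x \<le> y \<Longrightarrow> \<phi> x \<le> \<phi> y"
proof -
  assume xy: "0 \<le> x" "x \<le> y"
  show ?thesis
  proof (rule DERIV_nonneg_imp_increasing_open[of x y \<phi>])
    show "x \<le> y" by (rule xy(2))
    fix z assume z: "x < z" "z < y"
    then have "z > 0" using xy by simp
    then have "DERIV \<phi> z :> \<phi>' z" "\<phi>' z \<ge> 0" using phi_deriv_at phi'_nonneg by auto
    then show "\<exists>y. DERIV \<phi> z :> y \<and> y \<ge> 0" by blast
  next
    show "continuous_on {x..y} \<phi>" by (rule continuous_on_subset[OF phi_cont]) (use xy in auto)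
  qed
qed

lemma phi_nonneg: "t \<ge> 0 \<Longrightarrow> \<phi> t \<ge> 0"
  using phi_mono[of 0 t] Nf_basic(1) by simp

lemma phi_pos: "t > 0 \<Longrightarrow> \<phi> t > 0"
proof -
  assume t: "t > 0"
  have c: "continuous_on {0..t} \<phi>" by (rule continuous_on_subset[OF phi_cont]) auto
  have d: "\<phi> differentiable (at z)" if "0 < z" for z
    using phi_deriv_at[OF that] real_differentiable_def by blast
  obtain l z where z: "0 < z" "z < t" "DERIV \<phi> z :> l" "\<phi> t - \<phi> 0 = (t - 0) * l"
    using MVT[OF t c d] by blast
  have "l = \<phi>' z" by (rule DERIV_unique[OF z(3) phi_deriv_at[OF z(1)]])
  then have "l > 0" using Nf_basic(3)[OF z(1)] by simp
  then have "(t - 0) * l > 0" using t by simp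
  then show ?thesis using z(4) Nf_basic(1) by linarith
qed

lemma phi'_double: "t > 0 \<Longrightarrow> \<phi>' (2 * t) \<le> 2 powr (\<mu>2 - 1) * \<phi>' t"
proof -
  assume t: "t > 0"
  define g where "g s = ln (\<phi>' s) - (\<mu>2 - 1) * ln s" for s
  have "g (2 * t) \<le> g t"
  proof (rule DERIV_nonpos_imp_decreasing_open[of t "2*t" g])
    show "t \<le> 2 * t" using t by simp
    fix x assume x: "t < x" "x < 2 * t"
    then have x0: "x > 0" using t by simp
    have "DERIV g x :> \<phi>'' x / \<phi>' x - (\<mu>2 - 1) / x"
      unfolding g_def using x0 Nf_basic(3)[OF x0]
      by (auto intro!: derivative_eq_intros Nf_basic(7)[OF x0] simp: field_simps)
    moreover have "\<phi>'' x / \<phi>' x - (\<mu>2 - 1) / x \<le> 0"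
    proof -
      have "x * \<phi>'' x / \<phi>' x \<le> \<mu>2 - 1" using Nf_basic(9)[OF x0] .
      then have "\<phi>'' x / \<phi>' x \<le> (\<mu>2 - 1) / x" using x0 by (simp add: field_simps)
      then show ?thesis by simp
    qed
    ultimately show "\<exists>y. DERIV g x :> y \<and> y \<le> 0" by blast
  next
    have "\<forall>x\<in>{t..2*t}. isCont g x"
    proof
      fix x assume "x \<in> {t..2*t}"
      then have x0: "x > 0" using t by auto
      show "isCont g x" unfolding g_def using x0 Nf_basic(3)[OF x0]
        by (auto intro!: continuous_intros DERIV_isCont[OF Nf_basic(7)[OF x0]])
    qed
    then show "continuous_on {t..2*t} g" by (simp add: continuous_at_imp_continuous_on)
  qed
  then have "ln (\<phi>' (2*t)) \<le> ln (\<phi>' t) + (\<mu>2 - 1) * ln 2"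
    unfolding g_def using t by (simp add: ln_mult algebra_simps)
  then have "exp (ln (\<phi>' (2*t))) \<le> exp (ln (\<phi>' t) + (\<mu>2 - 1) * ln 2)" by simp
  then show ?thesis using t Nf_basic(3)[of t] Nf_basic(3)[of "2*t"]
    by (simp add: exp_add powr_def mult.commute)
qed

lemma delta2: "t \<ge> 0 \<Longrightarrow> \<phi> (2 * t) \<le> 2 powr \<mu>2 * \<phi> t"
proof -
  assume t: "t \<ge> 0"
  define g where "g s = 2 powr \<mu>2 * \<phi> s - \<phi> (2 * s)" for s
  have "g 0 \<le> g t"
  proof (rule DERIV_nonneg_imp_increasing_open[OF t])
    fix x assume x: "0 < x" "x < t"
    have "DERIV g x :> 2 powr \<mu>2 * \<phi>' x - \<phi>' (2 * x) * 2"
      unfolding g_def using x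
      by (auto intro!: derivative_eq_intros phi_deriv_at DERIV_chain2[of \<phi>, OF phi_deriv_at])
    moreover have "2 powr \<mu>2 * \<phi>' x - \<phi>' (2 * x) * 2 \<ge> 0"
    proof -
      have "\<phi>' (2 * x) * 2 \<le> 2 powr (\<mu>2 - 1) * \<phi>' x * 2" using phi'_double[of x] x by simp
      also have "\<dots> = 2 powr \<mu>2 * \<phi>' x" by (simp add: powr_diff)
      finally show ?thesis by simp
    qed
    ultimately show "\<exists>y. DERIV g x :> y \<and> 0 \<le> y" by blast
  next
    have "continuous_on {0..t} \<phi>" by (rule continuous_on_subset[OF phi_cont]) auto
    moreover have "continuous_on {0..t} (\<lambda>s. \<phi> (2 * s))"
      by (rule continuous_on_compose2[OF phi_cont]) (auto intro!: continuous_intros)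
    ultimately show "continuous_on {0..t} g" unfolding g_def by (auto intro!: continuous_intros)
  qed
  then show ?thesis unfolding g_def using Nf_basic(1) by simp
qed

lemma delta2_iter: "t \<ge> 0 \<Longrightarrow> \<phi> (2 ^ m * t) \<le> (2 powr \<mu>2) ^ m * \<phi> t"
proof (induction m)
  case 0 then show ?case by simp
next
  case (Suc m)
  have "\<phi> (2 ^ Suc m * t) = \<phi> (2 * (2 ^ m * t))" by (simp add: mult.assoc)
  also have "\<dots> \<le> 2 powr \<mu>2 * \<phi> (2 ^ m * t)" using Suc by (intro delta2) simp
  also have "\<dots> \<le> 2 powr \<mu>2 * ((2 powr \<mu>2) ^ m * \<phi> t)" using Suc by (intro mult_left_mono) auto
  finally show ?case by simp
qed

lemma phi_shift0: "t \<ge> 0 \<Longrightarrow> shifted \<phi>' 0 t = \<phi> t"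
proof -
  assume t: "t \<ge> 0"
  have "shifted \<phi>' 0 t = integral {0..t} \<phi>'"
    unfolding shifted_def by (rule integral_cong) (auto simp: Nf_basic(2))
  also have "\<dots> = \<phi> t - \<phi> 0"
  proof (rule integral_unique, rule fundamental_theorem_of_calculus[OF t])
    fix x assume "x \<in> {0..t}"
    then show "(\<phi> has_vector_derivative \<phi>' x) (at x within {0..t})"
    proof -
      have "(\<phi> has_real_derivative \<phi>' x) (at x within {0..t})"
        by (rule DERIV_subset[OF Nf_basic(4)]) (use \<open>x \<in> {0..t}\<close> in auto)
      then show ?thesis by (simp add: has_real_derivative_iff_has_vector_derivative)
    qed
  qed
  finally show ?thesis using Nf_basic(1) by simp
qed


lemma seteq: "T \<in> sets lebesgue \<Longrightarrow> set_integrable lebesgue T f \<longleftrightarrow> integrable (lebesgue_on T) f"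
  for f :: "'x::euclidean_space \<Rightarrow> real"
  by (rule set_integrable_eq) simp

definition hs :: "(real \<Rightarrow> real) \<Rightarrow> real \<Rightarrow> real \<Rightarrow> real" where
  "hs f a s = f (a + max s 0) * (max s 0 / (a + max s 0))"

context
  fixes a :: real assumes a: "a > 0"
begin

lemma hs_cont: "continuous_on UNIV (hs \<phi>' a)"
proof -
  have "continuous_on UNIV (\<lambda>s. \<phi>' (a + max s 0))"
    by (rule continuous_on_compose2[OF Nf_basic(5)]) (auto intro!: continuous_intros simp: a less_imp_le add_nonneg_nonneg)
  moreover have "continuous_on UNIV (\<lambda>s. max s 0 / (a + max s 0))"
    using a by (intro continuous_intros) (auto simp: add_pos_nonneg)
  ultimately show ?thesis unfolding hs_def by (rule continuous_on_mult)
qed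

lemma hs_zero: "s \<le> 0 \<Longrightarrow> hs \<phi>' a s = 0"
  unfolding hs_def by simp

lemma hs_pos: "s > 0 \<Longrightarrow> hs \<phi>' a s > 0"
  unfolding hs_def using a Nf_basic(3)[of "a + s"] by simp

lemma hs_nonneg: "hs \<phi>' a s \<ge> 0"
  using hs_zero hs_pos by (cases "s \<le> 0") (auto intro: less_imp_le)

lemma hs_mono: "x \<le> y \<Longrightarrow> hs \<phi>' a x \<le> hs \<phi>' a y"
proof -
  assume xy: "x \<le> y"
  define u where "u = max x 0"
  define v where "v = max y 0"
  have uv: "0 \<le> u" "u \<le> v" using xy unfolding u_def v_def by auto
  have 1: "\<phi>' (a + u) \<le> \<phi>' (a + v)"
    using a uv by (intro phi'_mono) auto
  have eu: "u / (a + u) = 1 - a / (a + u)" using a uv by (simp add: field_simps)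
  have ev: "v / (a + v) = 1 - a / (a + v)" using a uv by (simp add: field_simps)
  have "a / (a + v) \<le> a / (a + u)" using a uv by (intro divide_left_mono) auto
  then have 2: "u / (a + u) \<le> v / (a + v)" unfolding eu ev by simp
  have 3: "0 \<le> \<phi>' (a + v)" using a uv by (intro phi'_nonneg) simp
  have 4: "0 \<le> u / (a + u)" using a uv by simp
  show ?thesis unfolding hs_def u_def[symmetric] v_def[symmetric]
    by (rule mult_mono[OF 1 2 3 4])
qed

lemma hs_le: "s \<ge> 0 \<Longrightarrow> hs \<phi>' a s \<le> \<phi>' (a + s)"
proof -
  assume s: "s \<ge> 0"
  have "s / (a + s) \<le> 1" using a s by simp
  then have "\<phi>' (a + s) * (s / (a + s)) \<le> \<phi>' (a + s) * 1"
    using s a phi'_nonneg[of "a+s"] by (intro mult_left_mono) auto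
  then show ?thesis unfolding hs_def using s by simp
qed

lemma shifted_eq: "t \<ge> -1 \<Longrightarrow> shifted \<phi>' a t = integral {-1..t} (hs \<phi>' a)"
proof (cases "t < 0")
  case True
  assume t: "t \<ge> -1"
  have "integral {-1..t} (hs \<phi>' a) = integral {-1..t} (\<lambda>_. 0::real)"
    using True by (intro integral_cong) (auto simp: hs_zero)
  then have "integral {-1..t} (hs \<phi>' a) = 0" by (simp only: integral_0)
  moreover have "{0..t} = ({}::real set)" using True by simp
  ultimately show ?thesis unfolding shifted_def by simp
next
  case False
  assume t: "t \<ge> -1"
  have int: "hs \<phi>' a integrable_on {-1..t}"
    by (rule integrable_continuous_real, rule continuous_on_subset[OF hs_cont]) auto
  have "integral {-1..0} (hs \<phi>' a) + integral {0..t} (hs \<phi>' a) = integral {-1..t} (hs \<phi>' a)"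
    by (rule Henstock_Kurzweil_Integration.integral_combine[OF _ _ int]) (use False in auto)
  moreover have "integral {-1..0} (hs \<phi>' a) = integral {-1..0} (\<lambda>_::real. 0::real)"
    by (rule Henstock_Kurzweil_Integration.integral_cong) (auto simp: hs_zero)
  then have "integral {-1..0} (hs \<phi>' a) = 0" by (simp only: integral_0)
  moreover have "integral {0..t} (hs \<phi>' a) = shifted \<phi>' a t"
    unfolding shifted_def hs_def by (intro integral_cong) auto
  ultimately show ?thesis by linarith
qed

lemma F_deriv: "t > -1 \<Longrightarrow> (shifted \<phi>' a has_real_derivative hs \<phi>' a t) (at t)"
proof -
  assume t: "t > -1"
  have "((\<lambda>x. integral {-1..x} (hs \<phi>' a)) has_real_derivative hs \<phi>' a t) (at t within {-1..t+1})"
    using t by (intro integral_has_real_derivative continuous_on_subset[OF hs_cont]) auto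
  moreover have "t \<in> interior {-1..t+1}" using t by simp
  ultimately have "((\<lambda>x. integral {-1..x} (hs \<phi>' a)) has_real_derivative hs \<phi>' a t) (at t)"
    using at_within_interior[of t "{-1..t+1}"] by simp
  then show ?thesis
    by (rule has_field_derivative_transform_within_open[where S="{-1<..}"]) (use t shifted_eq in auto)
qed

lemma F_zero: "t \<le> 0 \<Longrightarrow> shifted \<phi>' a t = 0"
proof (cases "t < -1")
  case True
  then have "{0..t} = ({}::real set)" by simp
  then show ?thesis unfolding shifted_def by simp
next
  case False
  assume t: "t \<le> 0"
  have "integral {-1..t} (hs \<phi>' a) = integral {-1..t} (\<lambda>_. 0::real)"
    using t by (intro integral_cong) (auto simp: hs_zero)
  then have "integral {-1..t} (hs \<phi>' a) = 0" by (simp only: integral_0)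
  moreover have "shifted \<phi>' a t = integral {-1..t} (hs \<phi>' a)" using False by (intro shifted_eq) simp
  ultimately show ?thesis by simp
qed

lemma F_strict: "0 \<le> x \<Longrightarrow> x < y \<Longrightarrow> shifted \<phi>' a x < shifted \<phi>' a y"
proof -
  assume xy: "0 \<le> x" "x < y"
  have c: "continuous_on {x..y} (shifted \<phi>' a)"
    using xy by (intro continuous_at_imp_continuous_on ballI DERIV_isCont[OF F_deriv]) auto
  have d: "shifted \<phi>' a differentiable (at z)" if "x < z" for z
  proof -
    have "z > -1" using that xy by simp
    then show ?thesis using F_deriv real_differentiable_def by blast
  qed
  obtain l z where z: "x < z" "z < y" "DERIV (shifted \<phi>' a) z :> l"
      "shifted \<phi>' a y - shifted \<phi>' a x = (y - x) * l"
    using MVT[OF xy(2) c d] by blast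
  have "-1 < z" using z(1) xy(1) by simp
  then have "DERIV (shifted \<phi>' a) z :> hs \<phi>' a z" by (rule F_deriv)
  then have "l = hs \<phi>' a z" by (rule DERIV_unique[OF z(3)])
  then have "l > 0" using hs_pos z xy by auto
  then have "(y - x) * l > 0" using xy by simp
  then show ?thesis using z(4) by linarith
qed

lemma F_mono: "x \<le> y \<Longrightarrow> shifted \<phi>' a x \<le> shifted \<phi>' a y"
proof -
  assume xy: "x \<le> y"
  consider "y \<le> 0" | "x \<le> 0" "0 < y" | "0 < x" by linarith
  then show ?thesis
  proof cases
    case 1 then show ?thesis using F_zero xy by simp
  next
    case 2 then show ?thesis using F_zero[of x] F_zero[of 0] F_strict[of 0 y] by simp
  next
    case 3 then show ?thesis using F_strict[of x y] xy by (cases "x = y") auto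
  qed
qed

lemma F_nonneg: "shifted \<phi>' a t \<ge> 0"
  using F_mono[of 0 t] F_zero[of 0] F_zero[of t] by (cases "t \<ge> 0") auto

lemma F_convex: "convex_on {-1<..} (shifted \<phi>' a)"
  by (rule convex_on_realI[where f'="hs \<phi>' a"]) (auto intro: F_deriv hs_mono simp: convex_connected)

lemma F_tangent: "c > -1 \<Longrightarrow> x > -1 \<Longrightarrow>
    shifted \<phi>' a x - shifted \<phi>' a c \<ge> hs \<phi>' a c * (x - c)"
  by (rule convex_on_imp_above_tangent[OF F_convex])
     (auto simp: convex_connected interior_open[OF open_greaterThan] intro!: has_field_derivative_at_within[OF F_deriv])

lemma F_le_phi: "t \<ge> 0 \<Longrightarrow> shifted \<phi>' a t \<le> \<phi> (a + t)"
proof -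
  assume t: "t \<ge> 0"
  define g where "g s = \<phi> (a + s) - shifted \<phi>' a s" for s
  have "g 0 \<le> g t"
  proof (rule DERIV_nonneg_imp_increasing_open[OF t])
    fix x assume x: "0 < x" "x < t"
    have "DERIV g x :> \<phi>' (a + x) - hs \<phi>' a x"
      unfolding g_def using x a
      by (auto intro!: derivative_eq_intros F_deriv DERIV_chain2[of \<phi>, OF phi_deriv_at])
    moreover have "\<phi>' (a + x) - hs \<phi>' a x \<ge> 0" using hs_le[of x] x by simp
    ultimately show "\<exists>y. DERIV g x :> y \<and> 0 \<le> y" by blast
  next
    have c1: "isCont (\<lambda>s. \<phi> (a + s)) x" if "x \<in> {0..t}" for x
    proof -
      have "DERIV (\<lambda>s. \<phi> (a + s)) x :> \<phi>' (a + x) * 1" using that a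
        by (intro DERIV_chain2[of \<phi>, OF phi_deriv_at] derivative_eq_intros) auto
      then show ?thesis by (rule DERIV_isCont)
    qed
    have c2: "isCont (shifted \<phi>' a) x" if "x \<in> {0..t}" for x
      using that by (intro DERIV_isCont[OF F_deriv]) auto
    show "continuous_on {0..t} g" unfolding g_def
      by (intro continuous_at_imp_continuous_on ballI continuous_diff c1 c2)
  qed
  then show ?thesis unfolding g_def using F_zero[of 0] phi_nonneg[of a] a by simp
qed


lemma F_bound:
  assumes k: "k > 0" and m: "2 * k \<le> 2 ^ m" and e: "e \<ge> 0" and d: "0 \<le> d" "d \<le> e + a"
  shows "shifted \<phi>' a d \<le> \<phi> (4 * a) + (2 powr \<mu>2) ^ m * \<phi> (e / k)"
proof -
  have P: "(2 powr \<mu>2) ^ m * \<phi> (e / k) \<ge> 0" using phi_nonneg[of "e/k"] e k by simp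
  have "shifted \<phi>' a d \<le> \<phi> (a + d)" using F_le_phi d by simp
  also have "\<dots> \<le> \<phi> (2 * a + e)" using d a by (intro phi_mono) auto
  also have "\<dots> \<le> \<phi> (4 * a) + (2 powr \<mu>2) ^ m * \<phi> (e / k)"
  proof (cases "e \<le> 2 * a")
    case True
    then have "\<phi> (2 * a + e) \<le> \<phi> (4 * a)" using a e by (intro phi_mono) auto
    then show ?thesis using P by simp
  next
    case False
    have "2 * e \<le> 2 ^ m * (e / k)"
    proof -
      have "2 * k * e \<le> 2 ^ m * e" using m e by (intro mult_right_mono) auto
      then show ?thesis using k by (simp add: field_simps)
    qed
    then have "\<phi> (2 * a + e) \<le> \<phi> (2 ^ m * (e / k))" using False a e by (intro phi_mono) auto
    also have "\<dots> \<le> (2 powr \<mu>2) ^ m * \<phi> (e / k)" using e k by (intro delta2_iter) auto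
    finally show ?thesis using phi_nonneg[of "4*a"] a by simp
  qed
  finally show ?thesis .
qed

lemma F_borel: "shifted \<phi>' a \<in> borel_measurable borel"
  by (rule borel_measurable_mono) (auto simp: mono_def intro: F_mono)

lemma G_integrable:
  fixes Du :: "'x::euclidean_space \<Rightarrow> 'y::euclidean_space" and A :: 'y
  assumes Dm: "Du \<in> borel_measurable (lebesgue_on \<Omega>)" and k: "k > 0"
    and I: "set_integrable lebesgue \<Omega> (\<lambda>x. \<phi> (norm (Du x) / k))"
    and T: "T \<subseteq> \<Omega>" "T \<in> lmeasurable" and A: "norm A = a"
  shows "set_integrable lebesgue T (\<lambda>x. shifted \<phi>' a (norm (Du x - A)))"
proof -
  have Ts: "T \<in> sets lebesgue" using T(2) by (rule fmeasurableD)
  have DmT: "Du \<in> borel_measurable (lebesgue_on T)" by (rule measurable_restrict_mono[OF Dm T(1)])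
  have Gm: "(\<lambda>x. shifted \<phi>' a (norm (Du x - A))) \<in> borel_measurable (lebesgue_on T)"
    by (rule measurable_compose[OF _ F_borel]) (use DmT in measurable)
  obtain m where m: "2 * k < 2 ^ m" using real_arch_pow[of 2 "2*k"] by auto
  have IT: "integrable (lebesgue_on T) (\<lambda>x. \<phi> (norm (Du x) / k))"
    using set_integrable_subset[OF I Ts T(1)] seteq[OF Ts] by blast
  have CT: "integrable (lebesgue_on T) (\<lambda>x. \<phi> (4 * a))"
  proof -
    have "set_integrable lebesgue T (\<lambda>x. \<phi> (4 * a))"
      unfolding set_integrable_def using T(2)
      by (auto simp: fmeasurable_def intro!: integrable_mult_left)
    then show ?thesis using seteq[OF Ts] by blast
  qed
  have "integrable (lebesgue_on T) (\<lambda>x. \<phi> (4 * a) + (2 powr \<mu>2) ^ m * \<phi> (norm (Du x) / k))"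
    using CT IT by auto
  then have "integrable (lebesgue_on T) (\<lambda>x. shifted \<phi>' a (norm (Du x - A)))"
  proof (rule Bochner_Integration.integrable_bound[OF _ Gm], intro AE_I2)
    fix x
    have "norm (Du x - A) \<le> norm (Du x) + a" using norm_triangle_ineq4[of "Du x" A] A by simp
    then have "shifted \<phi>' a (norm (Du x - A)) \<le> \<phi> (4 * a) + (2 powr \<mu>2) ^ m * \<phi> (norm (Du x) / k)"
      using m k by (intro F_bound) auto
    moreover have "0 \<le> \<phi> (4 * a) + (2 powr \<mu>2) ^ m * \<phi> (norm (Du x) / k)"
      using phi_nonneg[of "4*a"] phi_nonneg[of "norm (Du x) / k"] a k by simp
    ultimately show "norm (shifted \<phi>' a (norm (Du x - A))) \<le>
       norm (\<phi> (4 * a) + (2 powr \<mu>2) ^ m * \<phi> (norm (Du x) / k))"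
      using F_nonneg by simp
  qed
  then show ?thesis using seteq[OF Ts] by blast
qed

end
end



theorem lemma3p12:
  fixes \<Omega> :: "(real^'n) set" and u :: "real^'n \<Rightarrow> real^'m" and Du :: "real^'n \<Rightarrow> real^'n^'m"
    and \<phi> \<phi>' \<phi>'' :: "real \<Rightarrow> real" and \<mu>1 \<mu>2 c\<mu>2 \<theta> \<rho> :: real and x0 :: "real^'n"
  assumes "CARD('n) \<ge> 2" and "CARD('m) \<ge> 2"
    and "open \<Omega>" and "bounded \<Omega>"
    and "N_function_reg \<phi> \<phi>' \<phi>'' \<mu>1 \<mu>2"
    and "\<forall>a b :: real^'n^'m. \<forall>t\<ge>0. shifted \<phi>' (norm a) t
            \<le> c\<mu>2 * shifted \<phi>' (norm b) t + 2 powr (- \<mu>2 - 1) * shifted \<phi>' (norm a) (norm (a - b))"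
    and "sobolev_orlicz \<phi> \<Omega> u Du"
    and "\<rho> > 0" and "ball x0 \<rho> \<subseteq> \<Omega>"
    and "0 < \<theta>" and "\<theta> < 1"
    and "excess \<phi>' Du x0 \<rho> / \<phi> (norm (avg Du x0 \<rho>)) \<le> \<theta> ^ CARD('n) / (2 powr (\<mu>2 + 1) * c\<mu>2)"
  shows "norm (avg Du x0 \<rho>) \<le> 2 * norm (avg Du x0 (\<theta> * \<rho>))"
proof (rule ccontr)
  note N = assms(5)
  note shift = assms(6)
  define A where "A = avg Du x0 \<rho>"
  define B where "B = avg Du x0 (\<theta> * \<rho>)"
  define a where "a = norm A"
  assume H: "\<not> norm (avg Du x0 \<rho>) \<le> 2 * norm (avg Du x0 (\<theta> * \<rho>))"
  then have Bl: "norm B < a / 2" unfolding A_def B_def a_def by simp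
  then have apos: "a > 0" using norm_ge_zero[of B] by linarith
  define F where "F = shifted \<phi>' a"
  define S where "S = ball x0 (\<theta> * \<rho>)"
  define T where "T = ball x0 \<rho>"
  have th\<rho>: "0 < \<theta> * \<rho>" "\<theta> * \<rho> < \<rho>" using assms(8,10,11) by auto
  have ST: "S \<subseteq> T" unfolding S_def T_def by (rule subset_ball) (use th\<rho> in linarith)
  have T\<Omega>: "T \<subseteq> \<Omega>" unfolding T_def using assms(9) .
  have mT: "measure lebesgue T > 0"
    unfolding T_def using content_ball_pos[OF assms(8), of x0] by simp
  have mS: "measure lebesgue S = \<theta> ^ CARD('n) * measure lebesgue T"
  proof -
    have "measure lebesgue S = (\<theta> * \<rho>) ^ CARD('n) * measure lborel (ball (0::real^'n) 1)"
      unfolding S_def using content_ball_conv_unit_ball[of "\<theta> * \<rho>" x0] th\<rho> by simp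
    moreover have "measure lebesgue T = \<rho> ^ CARD('n) * measure lborel (ball (0::real^'n) 1)"
      unfolding T_def using content_ball_conv_unit_ball[of "\<rho>" x0] assms(8) by simp
    ultimately show ?thesis by (simp add: power_mult_distrib)
  qed
  have mSpos: "measure lebesgue S > 0" using mS mT assms(10) by simp
  have Ss: "S \<in> lmeasurable" "T \<in> lmeasurable" unfolding S_def T_def by simp_all
  have Ssets: "S \<in> sets lebesgue" using Ss(1) by (rule fmeasurableD)
  have Sfin: "emeasure lebesgue S \<noteq> \<infinity>" using fmeasurableD2[OF Ss(1)] by simp
  from assms(7) have orl: "orlicz \<phi> \<Omega> Du" and wg: "weak_gradient \<Omega> u Du"
    unfolding sobolev_orlicz_def by auto
  from orl obtain k where k: "k > 0" "set_integrable lebesgue \<Omega> (\<lambda>x. \<phi> (norm (Du x) / k))"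
    and Dm: "Du \<in> borel_measurable (lebesgue_on \<Omega>)" unfolding orlicz_def by auto
  define G where "G x = F (norm (Du x - A))" for x
  have GT: "set_integrable lebesgue T G"
    unfolding G_def F_def
    by (rule G_integrable[OF N apos Dm k T\<Omega> Ss(2)]) (simp add: a_def)
  have GS: "set_integrable lebesgue S G" by (rule set_integrable_subset[OF GT Ssets ST])
  have DuS: "set_integrable lebesgue S Du"
  proof -
    have "cball x0 (\<theta> * \<rho>) \<subseteq> ball x0 \<rho>" using th\<rho> by (simp add: cball_subset_ball_iff)
    then have "cball x0 (\<theta> * \<rho>) \<subseteq> \<Omega>" using T\<Omega> unfolding T_def by blast
    moreover have "\<forall>K. compact K \<and> K \<subseteq> \<Omega> \<longrightarrow> set_integrable lebesgue K u \<and> set_integrable lebesgue K Du"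
      using wg unfolding weak_gradient_def by (rule conjunct1)
    ultimately have "set_integrable lebesgue (cball x0 (\<theta> * \<rho>)) Du"
      using compact_cball by blast
    then show ?thesis unfolding S_def by (rule set_integrable_subset) auto
  qed
  have ind: "integrable lebesgue (indicator S :: real^'n \<Rightarrow> real)"
  proof (rule integrable_real_indicator[OF Ssets])
    show "emeasure lebesgue S < \<infinity>" using Ss(1) unfolding fmeasurable_def by blast
  qed
  have AS: "set_integrable lebesgue S (\<lambda>_. A)"
    unfolding set_integrable_def by (rule integrable_scaleR_left) (rule ind)
  have DAS: "set_integrable lebesgue S (\<lambda>x. Du x - A)" using DuS AS by (rule set_integral_diff(1))
  have XS: "set_integrable lebesgue S (\<lambda>x. norm (Du x - A))" using DAS by (rule set_integrable_norm)
  define m where "m = measure lebesgue S"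
  have intDA: "(LINT x:S|lebesgue. Du x - A) = (LINT x:S|lebesgue. Du x) - m *\<^sub>R A"
    using set_integral_diff(2)[OF DuS AS] set_integral_const[OF Ssets Sfin] unfolding m_def by simp
  have BA: "B - A = (LINT x:S|lebesgue. Du x - A) /\<^sub>R m"
    unfolding intDA B_def avg_def S_def[symmetric] m_def[symmetric]
    using mSpos unfolding m_def by (simp add: algebra_simps)
  define c0 where "c0 = (LINT x:S|lebesgue. norm (Du x - A)) / m"
  have nBA: "norm (B - A) \<le> c0"
    unfolding BA c0_def using set_integral_norm_bound[OF DAS] mSpos unfolding m_def
    by (simp add: field_simps)
  have c0pos: "c0 \<ge> 0" using nBA norm_ge_zero[of "B - A"] by linarith
  define h where "h = hs \<phi>' a c0"
  have tang: "(F c0 - h * c0) + h * norm (Du x - A) \<le> G x" for x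
  proof -
    have "F (norm (Du x - A)) - F c0 \<ge> h * (norm (Du x - A) - c0)"
      unfolding F_def h_def by (rule F_tangent[OF N apos]) (use c0pos norm_ge_zero[of "Du x - A"] in linarith)+
    then show ?thesis unfolding G_def by (simp add: algebra_simps)
  qed
  have LX: "(LINT x:S|lebesgue. norm (Du x - A)) = m * c0"
    unfolding c0_def using mSpos unfolding m_def by simp
  have CS: "set_integrable lebesgue S (\<lambda>_. F c0 - h * c0)"
    unfolding set_integrable_def by (rule integrable_scaleR_left) (rule ind)
  have hXS: "set_integrable lebesgue S (\<lambda>x. h * norm (Du x - A))" using XS by simp
  have affS: "set_integrable lebesgue S (\<lambda>x. (F c0 - h * c0) + h * norm (Du x - A))"
    using CS hXS by (rule set_integral_add(1))
  have "(LINT x:S|lebesgue. (F c0 - h * c0) + h * norm (Du x - A))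
        = m * (F c0 - h * c0) + h * (LINT x:S|lebesgue. norm (Du x - A))"
    using set_integral_add(2)[OF CS hXS] set_integral_const[OF Ssets Sfin, where c="F c0 - h * c0"]
    unfolding m_def by simp
  also have "\<dots> = m * F c0" unfolding LX by (simp add: algebra_simps)
  finally have affI: "(LINT x:S|lebesgue. (F c0 - h * c0) + h * norm (Du x - A)) = m * F c0" .
  have jensen: "m * F c0 \<le> (LINT x:S|lebesgue. G x)"
    unfolding affI[symmetric]
    by (rule set_integral_mono[OF affS GS]) (rule tang)
  have Gnn: "G x \<ge> 0" for x unfolding G_def F_def by (rule F_nonneg[OF N apos])
  have monoset: "(LINT x:S|lebesgue. G x) \<le> (LINT x:T|lebesgue. G x)"
    unfolding set_lebesgue_integral_def
    apply (rule integral_mono)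
    using GS GT unfolding set_integrable_def apply auto[2]
    using ST Gnn by (auto simp: indicator_def)
  have exc: "excess \<phi>' Du x0 \<rho> = (LINT x:T|lebesgue. G x) / measure lebesgue T"
    unfolding excess_def avg_def G_def F_def a_def A_def T_def by (simp add: divide_inverse_commute)
  have "norm (A - B) = norm (B - A)" by (rule norm_minus_commute)
  then have "a / 2 < norm (B - A)"
    using Bl norm_triangle_ineq2[of A B] unfolding a_def by linarith
  then have "F (a / 2) < F (norm (B - A))"
    unfolding F_def using apos by (intro F_strict[OF N apos]) auto
  also have "\<dots> \<le> F c0" unfolding F_def using nBA by (rule F_mono[OF N apos])
  also have "\<dots> \<le> (LINT x:S|lebesgue. G x) / m" using jensen mSpos unfolding m_def
    by (simp add: field_simps)
  also have "\<dots> \<le> (LINT x:T|lebesgue. G x) / m" using monoset mSpos unfolding m_def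
    by (simp add: divide_right_mono)
  also have "\<dots> = excess \<phi>' Du x0 \<rho> / \<theta> ^ CARD('n)"
    unfolding exc m_def mS using mT assms(10) by (simp add: field_simps)
  finally have chain: "F (a / 2) < excess \<phi>' Du x0 \<rho> / \<theta> ^ CARD('n)" .
  have F0: "F 0 = 0" unfolding F_def using F_zero[OF N apos, of 0] by simp
  have cpos: "c\<mu>2 > 0"
  proof -
    have "shifted \<phi>' (norm A) 1 \<le> c\<mu>2 * shifted \<phi>' (norm A) 1
        + 2 powr (- \<mu>2 - 1) * shifted \<phi>' (norm A) (norm (A - A))"
      by (rule shift[rule_format, of 1 A A]) simp
    then have "F 1 \<le> c\<mu>2 * F 1 + 2 powr (- \<mu>2 - 1) * F 0"
      unfolding F_def a_def by simp
    then have "1 * F 1 \<le> c\<mu>2 * F 1" using F0 by simp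
    moreover have "F 1 > 0" using F_strict[OF N apos, of 0 1] F0 unfolding F_def by simp
    ultimately have "1 \<le> c\<mu>2" by (rule mult_right_le_imp_le)
    then show ?thesis by simp
  qed
  define P where "P = 2 powr \<mu>2"
  have Ppos: "P > 0" unfolding P_def by simp
  have P1: "2 powr (\<mu>2 + 1) = 2 * P" unfolding P_def by (simp add: powr_add)
  have P2: "2 powr (- \<mu>2 - 1) = 1 / (2 * P)" unfolding P_def
    by (simp add: powr_diff powr_minus divide_simps)
  define Q where "Q = \<phi> a"
  have Qpos: "Q > 0" unfolding Q_def using phi_pos[OF N apos] .
  have "excess \<phi>' Du x0 \<rho> \<le> \<theta> ^ CARD('n) / (2 * P * c\<mu>2) * Q"
    using assms(12) Qpos unfolding P1 Q_def A_def[symmetric] a_def[symmetric]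
    by (simp add: divide_le_eq)
  then have "excess \<phi>' Du x0 \<rho> / \<theta> ^ CARD('n) \<le> Q / (2 * P * c\<mu>2)"
    using assms(10) Ppos cpos by (simp add: field_simps)
  with chain have y: "F (a / 2) < Q / (2 * P * c\<mu>2)" by simp
  then have cy: "c\<mu>2 * F (a / 2) < Q / (2 * P)" using cpos Ppos
    by (simp add: field_simps)
  have "\<phi> (a / 2) \<le> c\<mu>2 * F (a / 2) + 1 / (2 * P) * Q"
  proof -
    have "shifted \<phi>' (norm (0::real^'n^'m)) (a / 2) \<le> c\<mu>2 * shifted \<phi>' (norm A) (a / 2)
        + 2 powr (- \<mu>2 - 1) * shifted \<phi>' (norm (0::real^'n^'m)) (norm (0 - A))"
      by (rule shift[rule_format, of "a/2" 0 A]) (use apos in simp)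
    then have "shifted \<phi>' 0 (a / 2) \<le> c\<mu>2 * shifted \<phi>' a (a / 2)
        + 2 powr (- \<mu>2 - 1) * shifted \<phi>' 0 a"
      by (simp add: a_def)
    then show ?thesis unfolding P2 Q_def F_def
      using phi_shift0[OF N, of "a/2"] phi_shift0[OF N, of a] apos by simp
  qed
  moreover have "Q \<le> P * \<phi> (a / 2)" unfolding Q_def P_def
    using delta2[OF N, of "a/2"] apos by simp
  ultimately have "Q \<le> P * (c\<mu>2 * F (a / 2) + 1 / (2 * P) * Q)"
    using Ppos by (meson mult_left_mono less_imp_le order_trans)
  also have "\<dots> = P * (c\<mu>2 * F (a / 2)) + Q / 2" using Ppos by (simp add: field_simps)
  finally have "Q \<le> P * (c\<mu>2 * F (a / 2)) + Q / 2" .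
  moreover have "P * (c\<mu>2 * F (a / 2)) < Q / 2" using cy Ppos by (simp add: field_simps)
  ultimately show False by simp
qed

end
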